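(* Let $N\ge2$, $a\in\mathbb{R}$, $\alpha\in(0,1]$, $\sigma_r^2,\sigma_w^2\ge0$. Let $P$ be a symmetric, doubly stochastic $N\times N$ matrix with nonnegative entries and eigenvalues $-1<\lambda_N(P)\le\dots\le\lambda_2(P)<\lambda_1(P)=1$, and suppose $P$ is positive semi-definite. Let $i\neq j$ with $p_{ij}=\epsilon>0$, and let $P_{-\epsilon}=P+\epsilon(\mathbf e_i-\mathbf e_j)(\mathbf e_i-\mathbf e_j)^{\mathsf T}$ be the communication matrix obtained by removing the edge $\{i,j\}$ of weight $\epsilon$ (adding $\epsilon$ to $p_{ii}$ and $p_{jj}$). Assume $|a|<1/|\alpha|$ and that both $a(P-\alpha I_N)$ and $a(P_{-\epsilon}-\alpha I_N)$ have spectral radius less than $1$. For a symmetric matrix $M$ with eigenvalues $\lambda_1(M),\dots,\lambda_N(M)$ define $$\tilde{\mathrm{MSD}}(M,\alpha)=\frac{\sigma_r^2}{1-a^2(1-\alpha)^2}+\frac1N\sum_{k=1}^N\frac{a^2\alpha^2\sigma_w^2\lambda_k^2(M)}{1-a^2(\lambda_k(M)-\alpha)^2}.$$ Then $\tilde{\mathrm{MSD}}(P,\alpha)\le\tilde{\mathrm{MSD}}(P_{-\epsilon},\alpha)$.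
   Context: $\tilde{\mathrm{MSD}}(M,\alpha)$ is the steady-state mean square deviation per agent of the estimator $\tilde{x}_{i,t+1}=a(\sum_jm_{ij}\tilde{x}_{j,t}+\alpha(\sum_jm_{ij}y_{j,t}-\tilde{x}_{i,t}))$ for the model $x_{t+1}=ax_t+r_t$, $y_{i,t}=x_t+w_{i,t}$ with innovation variance $\sigma_r^2$ and observation-noise variance $\sigma_w^2$. $\mathbf e_i$ is the $i$-th standard basis vector of $\mathbb{R}^N$. *)

theory Defs
  imports "Jordan_Normal_Form.Spectral_Radius"
begin

text \<open>For a symmetric real matrix all
  eigenvalues are real, so this multiset has exactly dim M elements.\<close>
definition eig_mset :: "real mat \<Rightarrow> real multiset" where
  "eig_mset M = proots (char_poly M)"

definition real_spectral_radius :: "real mat \<Rightarrow> real" where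
  "real_spectral_radius M = spectral_radius (map_mat complex_of_real M)"

definition MSD_tilde :: "real \<Rightarrow> real \<Rightarrow> real \<Rightarrow> nat \<Rightarrow> real mat \<Rightarrow> real \<Rightarrow> real" where
  "MSD_tilde a sr2 sw2 N M \<alpha> =
     sr2 / (1 - a^2 * (1 - \<alpha>)^2)
     + (1 / real N) * sum_mset (image_mset
         (\<lambda>l. a^2 * \<alpha>^2 * sw2 * l^2 / (1 - a^2 * (l - \<alpha>)^2)) (eig_mset M))"

definition remove_edge :: "nat \<Rightarrow> real mat \<Rightarrow> nat \<Rightarrow> nat \<Rightarrow> real \<Rightarrow> real mat" where
  "remove_edge N P i j eps =
     (let d = unit_vec N i - unit_vec N j
      in P + eps \<cdot>\<^sub>m mat N N (\<lambda>(k,l). d $ k * d $ l))"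

end

theory Submission
  imports Defs
begin

lemma sym_real_eigenvalue:
  fixes A :: "real mat"
  assumes A: "A \<in> carrier_mat n n" and sym: "transpose_mat A = A" and n: "n > 0"
  shows "\<exists>e. eigenvalue A e"
proof -
  define Ac where "Ac = map_mat complex_of_real A"
  have Ac: "Ac \<in> carrier_mat n n" using A by (simp add: Ac_def)
  from spectrum_non_empty[OF Ac n] obtain z where "eigenvalue Ac z" unfolding spectrum_def by auto
  then obtain v where ev: "eigenvector Ac v z" unfolding eigenvalue_def by auto
  hence v: "v \<in> carrier_vec n" and v0: "v \<noteq> 0\<^sub>v n" and Av: "Ac *\<^sub>v v = z \<cdot>\<^sub>v v"
    using Ac unfolding eigenvector_def by auto
  have Aij: "A $$ (i,j) = A $$ (j,i)" if "i < n" "j < n" for i j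
    using sym that A by (metis carrier_matD index_transpose_mat(1))
  have row: "z * v $ i = (\<Sum>j<n. complex_of_real (A $$ (i,j)) * v $ j)" if i: "i < n" for i
  proof -
    have "(Ac *\<^sub>v v) $ i = z * v $ i" using Av i v by simp
    moreover have "(Ac *\<^sub>v v) $ i = (\<Sum>j<n. complex_of_real (A $$ (i,j)) * v $ j)"
      using i v A Ac unfolding Ac_def
      by (auto simp: scalar_prod_def lessThan_atLeast0 intro!: sum.cong)
    ultimately show ?thesis by simp
  qed
  define s where "s = (\<Sum>i<n. \<Sum>j<n. cnj (v $ i) * complex_of_real (A $$ (i,j)) * v $ j)"
  have s1: "s = z * complex_of_real (\<Sum>i<n. (cmod (v $ i))^2)"
  proof -
    have "s = (\<Sum>i<n. cnj (v $ i) * (z * v $ i))"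
      unfolding s_def by (intro sum.cong refl, subst row, auto simp: sum_distrib_left mult.assoc)
    also have "\<dots> = z * (\<Sum>i<n. cnj (v $ i) * v $ i)"
      by (simp add: sum_distrib_left algebra_simps)
    also have "(\<Sum>i<n. cnj (v $ i) * v $ i) = complex_of_real (\<Sum>i<n. (cmod (v $ i))^2)"
    proof -
      have "cnj (v $ i) * v $ i = complex_of_real ((cmod (v $ i))^2)" for i
        using complex_norm_square[of "v $ i"] by (simp add: mult.commute)
      thus ?thesis unfolding of_real_sum by simp
    qed
    finally show ?thesis .
  qed
  have "cnj s = (\<Sum>i<n. \<Sum>j<n. v $ i * complex_of_real (A $$ (i,j)) * cnj (v $ j))"
    unfolding s_def by (simp add: cnj_sum)
  also have "\<dots> = (\<Sum>j<n. \<Sum>i<n. v $ i * complex_of_real (A $$ (i,j)) * cnj (v $ j))"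
    by (rule sum.swap)
  also have "\<dots> = s" unfolding s_def
    by (intro sum.cong refl, subst Aij, auto simp: mult.commute mult.left_commute)
  finally have cs: "cnj s = s" .
  have pos: "(\<Sum>i<n. (cmod (v $ i))^2) > 0"
  proof -
    obtain i where i: "i < n" "v $ i \<noteq> 0" using v0 v by (metis carrier_vecD eq_vecI index_zero_vec)
    have "(cmod (v $ i))^2 \<le> (\<Sum>i<n. (cmod (v $ i))^2)"
      by (rule member_le_sum, insert i, auto)
    moreover have "(cmod (v $ i))^2 > 0" using i by simp
    ultimately show ?thesis by linarith
  qed
  have "Im s = 0" using arg_cong[OF cs, of Im] by simp
  hence "Im z * (\<Sum>i<n. (cmod (v $ i))^2) = 0" using s1 by simp
  hence imz: "Im z = 0" using pos by simp
  define e where "e = Re z"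
  have ze: "z = complex_of_real e" using imz unfolding e_def by (simp add: complex_eq_iff)
  have "poly (char_poly Ac) z = 0" using \<open>eigenvalue Ac z\<close> eigenvalue_root_char_poly[OF Ac] by auto
  also have "char_poly Ac = map_poly complex_of_real (char_poly A)"
    unfolding Ac_def by (rule of_real_hom.char_poly_hom[OF A])
  finally have "poly (char_poly A) e = 0" unfolding ze by simp
  thus ?thesis using eigenvalue_root_char_poly[OF A] by auto
qed

lemma conj_real_vec[simp]: "conjugate (v :: real vec) = v"
  by (rule eq_vecI, auto)

lemma cscalar_real[simp]: "(v :: real vec) \<bullet>c w = v \<bullet> w"
  by simp

lemma orth_completion:
  fixes u :: "real vec"
  assumes u: "u \<in> carrier_vec n" and u1: "u \<bullet> u = 1"
  shows "\<exists>Q. Q \<in> carrier_mat n n \<and> transpose_mat Q * Q = 1\<^sub>m n \<and> col Q 0 = u"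
proof -
  interpret cof_vec_space n "TYPE(real)" .
  have u0: "u \<noteq> 0\<^sub>v n" using u1 by auto
  have n: "n > 0"
  proof (rule ccontr)
    assume "\<not> n > 0"
    hence "u = 0\<^sub>v n" using u by (intro eq_vecI, auto)
    thus False using u0 by simp
  qed
  define b where "b = basis_completion u"
  from basis_completion[OF u u0, folded b_def]
  have dist_b: "distinct b" and indep: "\<not> lin_dep (set b)" and bc: "set b \<subseteq> carrier_vec n"
    and hdb: "hd b = u" and len_b: "length b = n" by auto
  from hdb len_b n obtain vs where bv: "b = u # vs" by (cases b, auto)
  define ws where "ws = gram_schmidt n b"
  from gram_schmidt_result[OF bc dist_b indep ws_def]
  have ws: "set ws \<subseteq> carrier_vec n" "corthogonal ws" "length ws = n" by (auto simp: len_b)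
  have hdws: "hd ws = u" unfolding ws_def bv using u by simp
  define ws' where "ws' = map (\<lambda>w. (1 / sqrt (w \<bullet> w)) \<cdot>\<^sub>v w) ws"
  have ws'c: "set ws' \<subseteq> carrier_vec n" using ws unfolding ws'_def by auto
  have len': "length ws' = n" using ws unfolding ws'_def by auto
  define Q where "Q = mat_of_cols n ws'"
  have Q: "Q \<in> carrier_mat n n" unfolding Q_def using len' by auto
  have colQ: "col Q i = ws' ! i" if "i < n" for i
    unfolding Q_def using that ws'c len' by (intro col_mat_of_cols, auto)
  have wsi: "ws ! i \<in> carrier_vec n" if "i < n" for i using ws that by auto
  have pos: "ws ! i \<bullet> ws ! i > 0" if "i < n" for i
  proof -
    have "ws ! i \<bullet> ws ! i \<noteq> 0" using corthogonalD[OF ws(2), of i i] ws(3) that by auto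
    moreover have "ws ! i \<bullet> ws ! i \<ge> 0" unfolding scalar_prod_def by (auto intro: sum_nonneg)
    ultimately show ?thesis by linarith
  qed
  have "transpose_mat Q * Q = 1\<^sub>m n"
  proof (rule eq_matI)
    fix i j assume i: "i < dim_row (1\<^sub>m n)" and j: "j < dim_col (1\<^sub>m n)"
    hence i: "i < n" and j: "j < n" by auto
    have "(transpose_mat Q * Q) $$ (i,j) = col Q i \<bullet> col Q j"
      using Q i j by (auto simp: row_transpose)
    also have "\<dots> = (1 / sqrt (ws!i \<bullet> ws!i)) * (1 / sqrt (ws!j \<bullet> ws!j)) * (ws ! i \<bullet> ws ! j)"
      unfolding colQ[OF i] colQ[OF j] ws'_def using i j ws(3) wsi[OF i] wsi[OF j]
      by (simp add: smult_scalar_prod_distrib scalar_prod_smult_distrib)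
    also have "\<dots> = 1\<^sub>m n $$ (i,j)"
    proof (cases "i = j")
      case True
      have p: "ws!i \<bullet> ws!i > 0" using pos[OF i] .
      have "sqrt (ws!i \<bullet> ws!i) * sqrt (ws!i \<bullet> ws!i) = ws!i \<bullet> ws!i" using p by simp
      thus ?thesis using True i p by (simp add: field_simps)
    next
      case False
      hence "ws ! i \<bullet> ws ! j = 0" using corthogonalD[OF ws(2), of i j] ws(3) i j by auto
      thus ?thesis using False i j by simp
    qed
    finally show "(transpose_mat Q * Q) $$ (i,j) = 1\<^sub>m n $$ (i,j)" .
  qed (insert Q, auto)
  moreover have "col Q 0 = u"
  proof -
    have "ws ! 0 = u" using hdws ws(3) n by (cases ws, auto)
    thus ?thesis unfolding colQ[OF n] ws'_def using ws(3) n u1 by simp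
  qed
  ultimately show ?thesis using Q by blast
qed

lemma spectral_decomp:
  fixes A :: "real mat"
  assumes "A \<in> carrier_mat n n" "transpose_mat A = A"
  shows "\<exists>U D. U \<in> carrier_mat n n \<and> D \<in> carrier_mat n n \<and> diagonal_mat D \<and>
    transpose_mat U * U = 1\<^sub>m n \<and> A = U * D * transpose_mat U"
  using assms
proof (induction n arbitrary: A)
  case 0
  thus ?case by (intro exI[of _ "1\<^sub>m 0"] exI[of _ "0\<^sub>m 0 0"], auto simp: diagonal_mat_def intro!: eq_matI)
next
  case (Suc m A)
  let ?n = "Suc m"
  have A: "A \<in> carrier_mat ?n ?n" and sym: "transpose_mat A = A" using Suc by auto
  obtain e where "eigenvalue A e" using sym_real_eigenvalue[OF A sym] by auto
  from find_eigenvector[OF A this] obtain v where "eigenvector A v e" by auto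
  hence v: "v \<in> carrier_vec ?n" and v0: "v \<noteq> 0\<^sub>v ?n" and Av: "A *\<^sub>v v = e \<cdot>\<^sub>v v"
    using A unfolding eigenvector_def by auto
  have vpos: "v \<bullet> v > 0"
  proof -
    obtain i where i: "i < ?n" "v $ i \<noteq> 0" using v0 v by (metis carrier_vecD eq_vecI index_zero_vec)
    have "(v $ i)^2 \<le> (\<Sum>k\<in>{0..<?n}. (v $ k)^2)" by (rule member_le_sum, insert i, auto)
    moreover have "(v $ i)^2 > 0" using i by simp
    moreover have "v \<bullet> v = (\<Sum>k\<in>{0..<?n}. (v $ k)^2)" using v by (simp add: scalar_prod_def power2_eq_square)
    ultimately show ?thesis by linarith
  qed
  define u where "u = (1 / sqrt (v \<bullet> v)) \<cdot>\<^sub>v v"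
  have u: "u \<in> carrier_vec ?n" using v unfolding u_def by auto
  have u1: "u \<bullet> u = 1"
  proof -
    have "u \<bullet> u = (1 / sqrt (v \<bullet> v)) * (1 / sqrt (v \<bullet> v)) * (v \<bullet> v)"
      unfolding u_def using v by (simp add: smult_scalar_prod_distrib scalar_prod_smult_distrib)
    also have "\<dots> = 1" using vpos by (simp add: field_simps)
    finally show ?thesis .
  qed
  have Au: "A *\<^sub>v u = e \<cdot>\<^sub>v u"
  proof -
    have "A *\<^sub>v u = (1 / sqrt (v \<bullet> v)) \<cdot>\<^sub>v (A *\<^sub>v v)" unfolding u_def by (rule mult_mat_vec[OF A v])
    also have "\<dots> = (1 / sqrt (v \<bullet> v) * e) \<cdot>\<^sub>v v" unfolding Av by (rule smult_smult_assoc)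
    also have "\<dots> = (e * (1 / sqrt (v \<bullet> v))) \<cdot>\<^sub>v v" by (simp only: mult.commute)
    also have "\<dots> = e \<cdot>\<^sub>v u" unfolding u_def by (rule smult_smult_assoc[symmetric])
    finally show ?thesis .
  qed
  obtain Q where Q: "Q \<in> carrier_mat ?n ?n" and QtQ: "transpose_mat Q * Q = 1\<^sub>m ?n" and Q0: "col Q 0 = u"
    using orth_completion[OF u u1] by auto
  have Qt: "transpose_mat Q \<in> carrier_mat ?n ?n" using Q by auto
  have QQt: "Q * transpose_mat Q = 1\<^sub>m ?n" using mat_mult_left_right_inverse[OF Qt Q QtQ] .
  define C where "C = transpose_mat Q * A * Q"
  have C: "C \<in> carrier_mat ?n ?n" unfolding C_def using Q A by auto
  have Csym: "transpose_mat C = C"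
  proof -
    have QtA: "transpose_mat Q * A \<in> carrier_mat ?n ?n" using Qt A by auto
    have "transpose_mat C = transpose_mat Q * transpose_mat (transpose_mat Q * A)"
      unfolding C_def by (rule transpose_mult[OF QtA Q])
    also have "transpose_mat (transpose_mat Q * A) = transpose_mat A * Q"
      using transpose_mult[OF Qt A] by simp
    also have "transpose_mat Q * (transpose_mat A * Q) = C"
      unfolding sym C_def by (rule assoc_mult_mat[symmetric, OF Qt A Q])
    finally show ?thesis .
  qed
  have colC: "col C 0 = e \<cdot>\<^sub>v unit_vec ?n 0"
  proof -
    have "col C 0 = (transpose_mat Q * A) *\<^sub>v col Q 0" unfolding C_def
      by (rule col_mult2[of _ ?n ?n], insert Q A, auto)
    also have "\<dots> = transpose_mat Q *\<^sub>v (A *\<^sub>v u)" unfolding Q0 by (rule assoc_mult_mat_vec[OF Qt A u])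
    also have "\<dots> = e \<cdot>\<^sub>v (transpose_mat Q *\<^sub>v u)" unfolding Au using mult_mat_vec[OF Qt u] .
    also have "transpose_mat Q *\<^sub>v u = col (transpose_mat Q * Q) 0"
      unfolding Q0[symmetric] by (rule col_mult2[symmetric, of _ ?n ?n], insert Q, auto)
    also have "\<dots> = unit_vec ?n 0" unfolding QtQ by simp
    finally show ?thesis .
  qed
  have Ci0: "C $$ (i, 0) = (if i = 0 then e else 0)" if "i < ?n" for i
  proof -
    have "C $$ (i, 0) = col C 0 $ i" using C that by simp
    thus ?thesis unfolding colC using that by simp
  qed
  have C0j: "C $$ (0, j) = (if j = 0 then e else 0)" if "j < ?n" for j
  proof -
    have "C $$ (0, j) = transpose_mat C $$ (j, 0)" using C that by simp
    thus ?thesis unfolding Csym using Ci0[OF that] by simp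
  qed
  define C3 where "C3 = mat m m (\<lambda>(i,j). C $$ (Suc i, Suc j))"
  have C3: "C3 \<in> carrier_mat m m" unfolding C3_def by auto
  have C3sym: "transpose_mat C3 = C3"
  proof (rule eq_matI)
    fix i j assume "i < dim_row C3" "j < dim_col C3"
    hence ij: "i < m" "j < m" using C3 by auto
    have "C $$ (Suc j, Suc i) = transpose_mat C $$ (Suc i, Suc j)" using C ij by simp
    thus "transpose_mat C3 $$ (i, j) = C3 $$ (i, j)" unfolding Csym C3_def using ij by simp
  qed (auto simp: C3_def)
  obtain V D3 where V: "V \<in> carrier_mat m m" and D3: "D3 \<in> carrier_mat m m" and dD3: "diagonal_mat D3"
    and VtV: "transpose_mat V * V = 1\<^sub>m m" and C3eq: "C3 = V * D3 * transpose_mat V"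
    using Suc.IH[OF C3 C3sym] by auto
  define E where "E = mat 1 1 (\<lambda>_. e)"
  have E: "E \<in> carrier_mat 1 1" unfolding E_def by auto
  define B where "B = four_block_mat (1\<^sub>m 1) (0\<^sub>m 1 m) (0\<^sub>m m 1) V"
  define D where "D = four_block_mat E (0\<^sub>m 1 m) (0\<^sub>m m 1) D3"
  have "B \<in> carrier_mat (1 + m) (1 + m)" unfolding B_def using V by (intro four_block_carrier_mat, auto)
  hence B: "B \<in> carrier_mat ?n ?n" by simp
  have "D \<in> carrier_mat (1 + m) (1 + m)" unfolding D_def using D3 E by (intro four_block_carrier_mat, auto)
  hence D: "D \<in> carrier_mat ?n ?n" by simp
  have assoc: "\<And>X Y Z. X \<in> carrier_mat ?n ?n \<Longrightarrow> Y \<in> carrier_mat ?n ?n \<Longrightarrow> Z \<in> carrier_mat ?n ?n \<Longrightarrow> X * Y * Z = X * (Y * Z)"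
    by (rule assoc_mult_mat, auto)
  have mulc: "\<And>X Y. X \<in> carrier_mat ?n ?n \<Longrightarrow> Y \<in> carrier_mat ?n ?n \<Longrightarrow> X * Y \<in> carrier_mat ?n ?n"
    by auto
  have Bt: "transpose_mat B = four_block_mat (1\<^sub>m 1) (0\<^sub>m 1 m) (0\<^sub>m m 1) (transpose_mat V)"
    unfolding B_def using V by (subst transpose_four_block_mat, auto)
  have BtB: "transpose_mat B * B = 1\<^sub>m ?n"
    unfolding Bt unfolding B_def using V VtV
    by (subst mult_four_block_mat[OF one_carrier_mat zero_carrier_mat zero_carrier_mat _ one_carrier_mat zero_carrier_mat zero_carrier_mat V], auto)
  have CB: "C = B * D * transpose_mat B"
  proof -
    have "B * D * transpose_mat B = four_block_mat E (0\<^sub>m 1 m) (0\<^sub>m m 1) C3"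
      unfolding Bt unfolding B_def D_def C3eq using V D3 E
      by (subst mult_four_block_mat[OF one_carrier_mat zero_carrier_mat zero_carrier_mat V E zero_carrier_mat zero_carrier_mat D3],
        simp, subst mult_four_block_mat[of _ 1 1 _ m _ m], auto simp: E_def)
    also have "\<dots> = C"
    proof (rule eq_matI)
      fix i j assume "i < dim_row C" "j < dim_col C"
      hence ij: "i < ?n" "j < ?n" using C by auto
      show "four_block_mat E (0\<^sub>m 1 m) (0\<^sub>m m 1) C3 $$ (i, j) = C $$ (i, j)"
        using ij E C3 Ci0 C0j unfolding E_def C3_def
        by (cases i; cases j; auto)
    qed (insert C E C3, auto)
    finally show ?thesis by simp
  qed
  define U where "U = Q * B"
  have U: "U \<in> carrier_mat ?n ?n" unfolding U_def using Q B by auto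
  have Ut: "transpose_mat U = transpose_mat B * transpose_mat Q"
    unfolding U_def by (rule transpose_mult[OF Q B])
  have UtU: "transpose_mat U * U = 1\<^sub>m ?n"
  proof -
    have Btc: "transpose_mat B \<in> carrier_mat ?n ?n" using B by auto
    have "transpose_mat U * U = transpose_mat B * (transpose_mat Q * Q) * B"
      unfolding Ut unfolding U_def using Q Qt B Btc by (simp add: assoc mulc)
    also have "\<dots> = 1\<^sub>m ?n" unfolding QtQ using B BtB by simp
    finally show ?thesis .
  qed
  have AU: "A = U * D * transpose_mat U"
  proof -
    have "A = (Q * transpose_mat Q) * A * (Q * transpose_mat Q)" unfolding QQt using A by simp
    also have "\<dots> = Q * C * transpose_mat Q" unfolding C_def using Q A Qt by (simp add: assoc mulc)
    also have "\<dots> = U * D * transpose_mat U" unfolding CB Ut unfolding U_def using Q B D Qt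
      by (simp add: assoc mulc)
    finally show ?thesis .
  qed
  have dD: "diagonal_mat D"
    unfolding diagonal_mat_def D_def using dD3 D3 E unfolding diagonal_mat_def E_def by auto
  show ?case using U D dD UtU AU by blast
qed

lemma proots_lin_prod: "proots (\<Prod>a \<leftarrow> xs. [:- a, 1:]) = mset (xs :: real list)"
proof (induction xs)
  case (Cons a xs)
  have "(\<Prod>a \<leftarrow> xs. [:- a, 1:]) \<noteq> 0" by (simp only: prod_list_zero_iff, auto)
  hence "proots ([:- a, 1:] * (\<Prod>a \<leftarrow> xs. [:- a, 1:])) = proots [:- a, 1:] + proots (\<Prod>a \<leftarrow> xs. [:- a, 1:])"
    by (intro proots_mult, auto)
  also have "proots [:- a, 1:] = {#a#}" using proots_linear_factor[of "-a"] by simp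
  finally show ?case using Cons by simp
qed simp

lemma eig_decomp:
  fixes A U D :: "real mat"
  assumes A: "A \<in> carrier_mat n n" and U: "U \<in> carrier_mat n n" and D: "D \<in> carrier_mat n n"
    and dD: "diagonal_mat D" and UtU: "transpose_mat U * U = 1\<^sub>m n" and AU: "A = U * D * transpose_mat U"
  shows "eig_mset A = mset (diag_mat D)"
proof -
  have Ut: "transpose_mat U \<in> carrier_mat n n" using U by auto
  have UUt: "U * transpose_mat U = 1\<^sub>m n" using mat_mult_left_right_inverse[OF Ut U UtU] .
  have "similar_mat A D" unfolding similar_mat_def similar_mat_wit_def Let_def
    using A U D Ut UUt UtU AU by (intro exI[of _ U] exI[of _ "transpose_mat U"], auto)
  hence "char_poly A = char_poly D" by (rule char_poly_similar)
  also have "upper_triangular D" using dD D unfolding diagonal_mat_def upper_triangular_def by auto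
  hence "char_poly D = (\<Prod>a \<leftarrow> diag_mat D. [:- a, 1:])" by (rule char_poly_upper_triangular[OF D])
  finally show ?thesis unfolding eig_mset_def by (simp add: proots_lin_prod)
qed

lemma orth_vec_exists:
  fixes I :: "real vec set"
  assumes fin: "finite I" and I: "I \<subseteq> carrier_vec n" and card: "card I < n"
  shows "\<exists>x \<in> carrier_vec n. x \<noteq> 0\<^sub>v n \<and> (\<forall>w\<in>I. w \<bullet> x = 0)"
proof -
  obtain xs where xs: "set xs = I" "distinct xs" using finite_distinct_list[OF fin] by auto
  define r where "r = length xs"
  have r: "r < n" using distinct_card[OF xs(2)] card xs(1) unfolding r_def by simp
  define c where "c = (\<lambda>i. if i < r then xs ! i else 0\<^sub>v n)"
  have cc: "c \<in> {0..<n} \<rightarrow> carrier_vec n" unfolding c_def using I xs(1) r_def nth_mem by fastforce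
  define R where "R = mat\<^sub>r n n (\<lambda>i. if i = n - 1 then 0\<^sub>v n else c i)"
  have R: "R \<in> carrier_mat n n" unfolding R_def by auto
  have "det R = 0" unfolding R_def by (rule det_row_0[OF _ cc], insert r, auto)
  then obtain x where x: "x \<in> carrier_vec n" "x \<noteq> 0\<^sub>v n" "R *\<^sub>v x = 0\<^sub>v n"
    using det_0_iff_vec_prod_zero[OF R] by auto
  have "\<forall>w\<in>I. w \<bullet> x = 0"
  proof
    fix w assume "w \<in> I"
    then obtain i where i: "i < r" "w = xs ! i" using xs(1) unfolding r_def by (auto simp: in_set_conv_nth)
    have wc: "w \<in> carrier_vec n" using I \<open>w \<in> I\<close> by auto
    have "i \<noteq> n - 1" "i < n" using i r by auto
    hence "row R i = w" unfolding R_def c_def using i wc by auto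
    hence "(R *\<^sub>v x) $ i = w \<bullet> x" using R \<open>i < n\<close> by simp
    thus "w \<bullet> x = 0" using x(3) \<open>i < n\<close> by simp
  qed
  thus ?thesis using x by auto
qed

lemma quad_form:
  fixes A U D :: "real mat"
  assumes U: "U \<in> carrier_mat n n" and D: "D \<in> carrier_mat n n"
    and dD: "diagonal_mat D" and UtU: "transpose_mat U * U = 1\<^sub>m n" and AU: "A = U * D * transpose_mat U"
    and x: "x \<in> carrier_vec n"
  shows "x \<bullet> (A *\<^sub>v x) = (\<Sum>k\<in>{0..<n}. D $$ (k,k) * (col U k \<bullet> x)^2)"
    and "x \<bullet> x = (\<Sum>k\<in>{0..<n}. (col U k \<bullet> x)^2)"
proof -
  have Ut: "transpose_mat U \<in> carrier_mat n n" using U by auto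
  have UUt: "U * transpose_mat U = 1\<^sub>m n" using mat_mult_left_right_inverse[OF Ut U UtU] .
  define c where "c = transpose_mat U *\<^sub>v x"
  have c: "c \<in> carrier_vec n" unfolding c_def using Ut x by auto
  have ck: "c $ k = col U k \<bullet> x" if "k < n" for k unfolding c_def using that U by auto
  have sw: "x \<bullet> (U *\<^sub>v y) = c \<bullet> y" if y: "y \<in> carrier_vec n" for y
    unfolding c_def using transpose_vec_mult_scalar[OF U y x] by simp
  have Dc: "(D *\<^sub>v c) $ k = D $$ (k,k) * c $ k" if k: "k < n" for k
  proof -
    have "(D *\<^sub>v c) $ k = (\<Sum>j\<in>{0..<n}. D $$ (k,j) * c $ j)"
      using D c k by (auto simp: scalar_prod_def)
    also have "\<dots> = (\<Sum>j\<in>{0..<n}. if j = k then D $$ (k,k) * c $ k else 0)"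
      using dD D k unfolding diagonal_mat_def by (intro sum.cong, auto)
    also have "\<dots> = D $$ (k,k) * c $ k" using k by simp
    finally show ?thesis .
  qed
  have "A *\<^sub>v x = U *\<^sub>v (D *\<^sub>v c)" unfolding AU c_def using U D Ut x
    by (simp add: assoc_mult_mat_vec[of _ n n _ n])
  hence "x \<bullet> (A *\<^sub>v x) = c \<bullet> (D *\<^sub>v c)" using sw[of "D *\<^sub>v c"] D c by auto
  also have "\<dots> = (\<Sum>k\<in>{0..<n}. c $ k * (D $$ (k,k) * c $ k))"
    unfolding scalar_prod_def[of c] using c D by (intro sum.cong, auto simp: Dc simp del: index_mult_mat_vec)
  also have "\<dots> = (\<Sum>k\<in>{0..<n}. D $$ (k,k) * (col U k \<bullet> x)^2)"
    by (intro sum.cong refl, simp add: ck power2_eq_square)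
  finally show "x \<bullet> (A *\<^sub>v x) = (\<Sum>k\<in>{0..<n}. D $$ (k,k) * (col U k \<bullet> x)^2)" .
  have "x = U *\<^sub>v c" unfolding c_def using assoc_mult_mat_vec[OF U Ut x] UUt x by simp
  hence "x \<bullet> x = c \<bullet> c" using sw[OF c] by metis
  also have "\<dots> = (\<Sum>k\<in>{0..<n}. (col U k \<bullet> x)^2)"
    using c by (auto simp: scalar_prod_def ck power2_eq_square)
  finally show "x \<bullet> x = (\<Sum>k\<in>{0..<n}. (col U k \<bullet> x)^2)" .
qed

lemma count_mono:
  fixes A A2 U U2 D D2 :: "real mat"
  assumes U: "U \<in> carrier_mat n n" and D: "D \<in> carrier_mat n n"
    and dD: "diagonal_mat D" and UtU: "transpose_mat U * U = 1\<^sub>m n" and AU: "A = U * D * transpose_mat U"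
  assumes U2: "U2 \<in> carrier_mat n n" and D2: "D2 \<in> carrier_mat n n"
    and dD2: "diagonal_mat D2" and UtU2: "transpose_mat U2 * U2 = 1\<^sub>m n" and AU2: "A2 = U2 * D2 * transpose_mat U2"
    and le: "\<And>x. x \<in> carrier_vec n \<Longrightarrow> x \<bullet> (A *\<^sub>v x) \<le> x \<bullet> (A2 *\<^sub>v x)"
  shows "card {k\<in>{0..<n}. t < D $$ (k,k)} \<le> card {k\<in>{0..<n}. t < D2 $$ (k,k)}"
proof (rule ccontr)
  assume contra: "\<not> ?thesis"
  define S where "S = {k\<in>{0..<n}. D $$ (k,k) \<le> t}"
  define T where "T = {k\<in>{0..<n}. t < D2 $$ (k,k)}"
  have "card {k\<in>{0..<n}. t < D $$ (k,k)} + card S = n"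
  proof -
    have "{k\<in>{0..<n}. t < D $$ (k,k)} \<union> S = {0..<n}" "{k\<in>{0..<n}. t < D $$ (k,k)} \<inter> S = {}"
      unfolding S_def by auto
    thus ?thesis by (metis card_Un_disjoint card_atLeastLessThan diff_zero finite_Un finite_atLeastLessThan)
  qed
  hence cST: "card S + card T < n" using contra unfolding T_def by linarith
  define I where "I = col U ` S \<union> col U2 ` T"
  have finI: "finite I" unfolding I_def S_def T_def by auto
  have "card I \<le> card S + card T" unfolding I_def
    by (rule order.trans[OF card_Un_le], intro add_mono card_image_le, auto simp: S_def T_def)
  hence cI: "card I < n" using cST by linarith
  have Ic: "I \<subseteq> carrier_vec n" unfolding I_def S_def T_def using U U2 by auto
  obtain x where x: "x \<in> carrier_vec n" "x \<noteq> 0\<^sub>v n" and orth: "\<forall>w\<in>I. w \<bullet> x = 0"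
    using orth_vec_exists[OF finI Ic cI] by auto
  note q1 = quad_form[OF U D dD UtU AU x(1)]
  note q2 = quad_form[OF U2 D2 dD2 UtU2 AU2 x(1)]
  have cS: "col U k \<bullet> x = 0" if "k \<in> S" for k using orth that unfolding I_def by auto
  have cT: "col U2 k \<bullet> x = 0" if "k \<in> T" for k using orth that unfolding I_def by auto
  have xx: "x \<bullet> x > 0"
  proof -
    have "x \<bullet> x \<ge> 0" using conjugate_square_ge_0_vec[of x] by simp
    moreover have "x \<bullet> x \<noteq> 0" using conjugate_square_eq_0_vec[OF x(1)] x(2) by simp
    ultimately show ?thesis by linarith
  qed
  obtain k where k: "k < n" "col U k \<bullet> x \<noteq> 0"
  proof (rule ccontr)
    assume "\<not> thesis"
    hence "\<forall>k<n. col U k \<bullet> x = 0" using that by blast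
    hence "x \<bullet> x = 0" unfolding q1(2) by simp
    thus False using xx by simp
  qed
  have kS: "k \<notin> S" using cS k by blast
  have pos: "x \<bullet> (A *\<^sub>v x) - t * (x \<bullet> x) > 0"
  proof -
    have eq: "x \<bullet> (A *\<^sub>v x) - t * (x \<bullet> x) = (\<Sum>j\<in>{0..<n}. (D $$ (j,j) - t) * (col U j \<bullet> x)^2)"
      unfolding q1 by (simp add: sum_distrib_left sum_subtractf algebra_simps)
    have nn: "\<forall>j\<in>{0..<n}. 0 \<le> (D $$ (j,j) - t) * (col U j \<bullet> x)^2"
    proof
      fix j assume j: "j \<in> {0..<n}"
      show "0 \<le> (D $$ (j,j) - t) * (col U j \<bullet> x)^2"
      proof (cases "j \<in> S")
        case True thus ?thesis using cS by simp
      next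
        case False hence "D $$ (j,j) - t > 0" using j unfolding S_def by auto
        thus ?thesis by simp
      qed
    qed
    have "0 < (D $$ (k,k) - t) * (col U k \<bullet> x)^2" using kS k unfolding S_def by auto
    also have "\<dots> \<le> (\<Sum>j\<in>{0..<n}. (D $$ (j,j) - t) * (col U j \<bullet> x)^2)"
      by (rule member_le_sum, insert k nn, auto)
    finally show ?thesis unfolding eq .
  qed
  have neg: "x \<bullet> (A2 *\<^sub>v x) - t * (x \<bullet> x) \<le> 0"
  proof -
    have eq: "x \<bullet> (A2 *\<^sub>v x) - t * (x \<bullet> x) = (\<Sum>j\<in>{0..<n}. (D2 $$ (j,j) - t) * (col U2 j \<bullet> x)^2)"
      unfolding q2 by (simp add: sum_distrib_left sum_subtractf algebra_simps)
    have "(\<Sum>j\<in>{0..<n}. (D2 $$ (j,j) - t) * (col U2 j \<bullet> x)^2) \<le> 0"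
    proof (rule sum_nonpos)
      fix j assume j: "j \<in> {0..<n}"
      show "(D2 $$ (j,j) - t) * (col U2 j \<bullet> x)^2 \<le> 0"
      proof (cases "j \<in> T")
        case True thus ?thesis using cT by simp
      next
        case False hence "D2 $$ (j,j) - t \<le> 0" using j unfolding T_def by auto
        thus ?thesis by (simp add: mult_nonpos_nonneg)
      qed
    qed
    thus ?thesis unfolding eq .
  qed
  show False using pos neg le[OF x(1)] by linarith
qed

lemma eigcol:
  fixes A U D :: "real mat"
  assumes U: "U \<in> carrier_mat n n" and D: "D \<in> carrier_mat n n"
    and dD: "diagonal_mat D" and UtU: "transpose_mat U * U = 1\<^sub>m n" and AU: "A = U * D * transpose_mat U"
    and k: "k < n"
  shows "A *\<^sub>v col U k = D $$ (k,k) \<cdot>\<^sub>v col U k"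
proof -
  have Ut: "transpose_mat U \<in> carrier_mat n n" using U by auto
  have A: "A \<in> carrier_mat n n" unfolding AU using U D Ut by auto
  have "A * U = U * D * (transpose_mat U * U)" unfolding AU using U D Ut
    by (simp add: assoc_mult_mat[of _ n n _ n _ n])
  hence AU2: "A * U = U * D" unfolding UtU using U D by simp
  have "A *\<^sub>v col U k = col (A * U) k" by (rule col_mult2[symmetric, OF A U k])
  also have "\<dots> = U *\<^sub>v col D k" unfolding AU2 by (rule col_mult2[OF U D k])
  also have "col D k = D $$ (k,k) \<cdot>\<^sub>v unit_vec n k"
    using D dD k unfolding diagonal_mat_def by (intro eq_vecI, auto)
  also have "U *\<^sub>v (D $$ (k,k) \<cdot>\<^sub>v unit_vec n k) = D $$ (k,k) \<cdot>\<^sub>v (U *\<^sub>v unit_vec n k)"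
    by (rule mult_mat_vec[OF U], simp)
  also have "U *\<^sub>v unit_vec n k = col U k"
    using U k by (intro eq_vecI, auto)
  finally show ?thesis .
qed

lemma col_unit:
  fixes U :: "real mat"
  assumes U: "U \<in> carrier_mat n n" and UtU: "transpose_mat U * U = 1\<^sub>m n" and j: "j < n" and k: "k < n"
  shows "col U j \<bullet> col U k = (if j = k then 1 else 0)"
proof -
  have "(transpose_mat U * U) $$ (j,k) = col U j \<bullet> col U k" using U j k by simp
  thus ?thesis unfolding UtU using j k by simp
qed

lemma sr_bound:
  fixes M :: "real mat"
  assumes M: "M \<in> carrier_mat n n" and v: "v \<in> carrier_vec n" "v \<noteq> 0\<^sub>v n" and Mv: "M *\<^sub>v v = \<mu> \<cdot>\<^sub>v v"
  shows "\<bar>a * (\<mu> - \<alpha>)\<bar> \<le> real_spectral_radius (a \<cdot>\<^sub>m (M - \<alpha> \<cdot>\<^sub>m 1\<^sub>m n))"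
proof -
  define X where "X = a \<cdot>\<^sub>m (M - \<alpha> \<cdot>\<^sub>m 1\<^sub>m n)"
  have X: "X \<in> carrier_mat n n" unfolding X_def using M by auto
  have Xv: "X *\<^sub>v v = (a * (\<mu> - \<alpha>)) \<cdot>\<^sub>v v"
  proof (rule eq_vecI)
    fix i assume "i < dim_vec ((a * (\<mu> - \<alpha>)) \<cdot>\<^sub>v v)"
    hence i: "i < n" using v by auto
    have Mi: "row M i \<bullet> v = \<mu> * v $ i"
      using arg_cong[OF Mv, of "\<lambda>w. w $ i"] M v i by simp
    have rowX: "row X i = a \<cdot>\<^sub>v (row M i - \<alpha> \<cdot>\<^sub>v unit_vec n i)"
      unfolding X_def using M i by (intro eq_vecI, auto)
    have rM: "row M i \<in> carrier_vec n" using M by auto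
    have "(X *\<^sub>v v) $ i = (a \<cdot>\<^sub>v (row M i - \<alpha> \<cdot>\<^sub>v unit_vec n i)) \<bullet> v"
      using X i rowX by simp
    also have "\<dots> = a * ((row M i - \<alpha> \<cdot>\<^sub>v unit_vec n i) \<bullet> v)"
      by (rule smult_scalar_prod_distrib[of _ n], insert rM v, auto)
    also have "(row M i - \<alpha> \<cdot>\<^sub>v unit_vec n i) \<bullet> v = row M i \<bullet> v - (\<alpha> \<cdot>\<^sub>v unit_vec n i) \<bullet> v"
      by (rule minus_scalar_prod_distrib[of _ n], insert rM v, auto)
    also have "(\<alpha> \<cdot>\<^sub>v unit_vec n i) \<bullet> v = \<alpha> * v $ i"
      using v i by simp
    finally show "(X *\<^sub>v v) $ i = ((a * (\<mu> - \<alpha>)) \<cdot>\<^sub>v v) $ i" unfolding Mi using i v by (simp add: algebra_simps)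
  qed (insert X v, auto)
  have "eigenvector X v (a * (\<mu> - \<alpha>))" unfolding eigenvector_def using X v Xv by auto
  from of_real_hom.eigenvector_hom[OF X this]
  have "eigenvalue (map_mat complex_of_real X) (complex_of_real (a * (\<mu> - \<alpha>)))"
    unfolding eigenvalue_def by auto
  hence sp: "complex_of_real (a * (\<mu> - \<alpha>)) \<in> spectrum (map_mat complex_of_real X)"
    unfolding spectrum_def by auto
  have n: "n > 0"
  proof (rule ccontr)
    assume "\<not> n > 0"
    hence "v = 0\<^sub>v n" using v by (intro eq_vecI, auto)
    thus False using v by simp
  qed
  have Xc: "map_mat complex_of_real X \<in> carrier_mat n n" using X by auto
  have "norm (complex_of_real (a * (\<mu> - \<alpha>))) \<le> spectral_radius (map_mat complex_of_real X)"
    by (rule spectral_radius_mem_max(2)[OF Xc n], insert sp, auto)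
  hence "\<bar>a * (\<mu> - \<alpha>)\<bar> \<le> spectral_radius (map_mat complex_of_real X)" by (simp only: norm_of_real)
  thus ?thesis unfolding real_spectral_radius_def X_def .
qed

lemma f_mono:
  fixes x y a \<alpha> c :: real
  assumes x: "0 \<le> x" and xy: "x \<le> y" and a\<alpha>: "a^2 * \<alpha>^2 < 1" and \<alpha>: "\<alpha> \<ge> 0" and c: "c \<ge> 0"
    and dx: "a^2 * (x - \<alpha>)^2 < 1" and dy: "a^2 * (y - \<alpha>)^2 < 1"
  shows "c * x^2 / (1 - a^2 * (x - \<alpha>)^2) \<le> c * y^2 / (1 - a^2 * (y - \<alpha>)^2)"
proof -
  define p where "p = 1 - a^2 * (x - \<alpha>)^2"
  define q where "q = 1 - a^2 * (y - \<alpha>)^2"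
  have p: "p > 0" and q: "q > 0" using dx dy unfolding p_def q_def by auto
  have id: "y^2 * p - x^2 * q = (y - x) * ((x + y) * (1 - a^2 * \<alpha>^2) + 2 * a^2 * \<alpha> * x * y)"
    unfolding p_def q_def by (simp add: algebra_simps power2_eq_square)
  have "0 \<le> (y - x) * ((x + y) * (1 - a^2 * \<alpha>^2) + 2 * a^2 * \<alpha> * x * y)"
    using x xy a\<alpha> \<alpha> by (intro mult_nonneg_nonneg add_nonneg_nonneg, auto)
  hence key: "x^2 * q \<le> y^2 * p" using id by linarith
  have "x^2 / p \<le> y^2 / q" using p q key by (simp add: divide_simps mult.commute)
  hence "c * (x^2 / p) \<le> c * (y^2 / q)" using c by (rule mult_left_mono)
  thus ?thesis unfolding p_def q_def by simp
qed

lemma mset_sum_mono: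
  fixes A B :: "real multiset" and f :: "real \<Rightarrow> real"
  assumes "size A = size B"
    and "\<forall>x\<in>#A. \<forall>y\<in>#B. x \<le> y \<longrightarrow> f x \<le> f y"
    and "\<forall>t. size (filter_mset (\<lambda>l. t < l) A) \<le> size (filter_mset (\<lambda>l. t < l) B)"
  shows "sum_mset (image_mset f A) \<le> sum_mset (image_mset f B)"
  using assms
proof (induction "size A" arbitrary: A B)
  case 0
  thus ?case by auto
next
  case (Suc m A B)
  have Ane: "A \<noteq> {#}" and Bne: "B \<noteq> {#}" using Suc.hyps Suc.prems(1) by auto
  define a where "a = Max (set_mset A)"
  define b where "b = Max (set_mset B)"
  have aA: "a \<in># A" unfolding a_def using Ane by (intro Max_in, auto)
  have bB: "b \<in># B" unfolding b_def using Bne by (intro Max_in, auto)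
  have amax: "x \<le> a" if "x \<in># A" for x unfolding a_def using that by (intro Max_ge, auto)
  have bmax: "y \<le> b" if "y \<in># B" for y unfolding b_def using that by (intro Max_ge, auto)
  have ab: "a \<le> b"
  proof (rule ccontr)
    assume "\<not> a \<le> b"
    have "filter_mset (\<lambda>l. b < l) B = {#}" using bmax by (metis filter_mset_eq_mempty_iff not_less)
    moreover have "a \<in># filter_mset (\<lambda>l. b < l) A" using aA \<open>\<not> a \<le> b\<close> by auto
    hence "filter_mset (\<lambda>l. b < l) A \<noteq> {#}" by force
    hence "size (filter_mset (\<lambda>l. b < l) A) > 0" using nonempty_has_size by blast
    ultimately show False using Suc.prems(3) by (metis not_less size_empty)
  qed
  define A' where "A' = A - {#a#}"
  define B' where "B' = B - {#b#}"
  have A: "A = add_mset a A'" unfolding A'_def using aA by simp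
  have B: "B = add_mset b B'" unfolding B'_def using bB by simp
  have IH: "sum_mset (image_mset f A') \<le> sum_mset (image_mset f B')"
  proof (rule Suc.hyps(1))
    show "m = size A'" using Suc.hyps(2) A by simp
    show "size A' = size B'" using Suc.prems(1) A B by simp
    show "\<forall>x\<in>#A'. \<forall>y\<in>#B'. x \<le> y \<longrightarrow> f x \<le> f y" using Suc.prems(2) A B by auto
    show "\<forall>t. size (filter_mset (\<lambda>l. t < l) A') \<le> size (filter_mset (\<lambda>l. t < l) B')"
    proof
      fix t
      show "size (filter_mset (\<lambda>l. t < l) A') \<le> size (filter_mset (\<lambda>l. t < l) B')"
      proof (cases "t < a")
        case True
        hence "t < b" using ab by simp
        thus ?thesis using Suc.prems(3)[rule_format, of t] True unfolding A B by simp
      next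
        case False
        have "\<forall>x. x \<in># A' \<longrightarrow> \<not> t < x"
        proof (intro allI impI)
          fix x assume "x \<in># A'"
          hence "x \<in># A" unfolding A by simp
          hence "x \<le> a" by (rule amax)
          thus "\<not> t < x" using False by simp
        qed
        hence "size (filter_mset (\<lambda>l. t < l) A') = 0" by simp
        thus ?thesis by linarith
      qed
    qed
  qed
  have "f a \<le> f b" using Suc.prems(2) aA bB ab by auto
  thus ?case using IH unfolding A B by simp
qed

lemma size_filter_diag:
  fixes D :: "real mat"
  assumes D: "D \<in> carrier_mat n n"
  shows "size (filter_mset (\<lambda>l. t < l) (mset (diag_mat D))) = card {k\<in>{0..<n}. t < D $$ (k,k)}"
proof -
  have "size (filter_mset (\<lambda>l. t < l) (mset (diag_mat D))) = length (filter (\<lambda>l. t < l) (diag_mat D))"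
    by (metis mset_filter size_mset)
  also have "\<dots> = card {i. i < length (diag_mat D) \<and> t < diag_mat D ! i}" by (rule length_filter_conv_card)
  also have "{i. i < length (diag_mat D) \<and> t < diag_mat D ! i} = {k\<in>{0..<n}. t < D $$ (k,k)}"
    using D unfolding diag_mat_def by auto
  finally show ?thesis .
qed

theorem proposition2:
  fixes N :: nat and a \<alpha> sr2 sw2 \<epsilon> :: real and P :: "real mat" and i j :: nat
  assumes N: "N \<ge> 2"
    and alpha: "0 < \<alpha>" "\<alpha> \<le> 1"
    and sig: "sr2 \<ge> 0" "sw2 \<ge> 0"
    and P_dim: "P \<in> carrier_mat N N"
    and P_sym: "transpose_mat P = P"
    and P_nonneg: "\<forall>k<N. \<forall>l<N. P $$ (k, l) \<ge> 0"
    and P_rows: "\<forall>k<N. (\<Sum>l<N. P $$ (k, l)) = 1"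
    and P_cols: "\<forall>l<N. (\<Sum>k<N. P $$ (k, l)) = 1"
    and P_eig: "\<forall>l \<in># eig_mset P. -1 < l \<and> l \<le> 1" "count (eig_mset P) 1 = 1"
    and P_psd: "\<forall>x \<in> carrier_vec N. x \<bullet> (P *\<^sub>v x) \<ge> 0"
    and ij: "i < N" "j < N" "i \<noteq> j"
    and eps: "P $$ (i, j) = \<epsilon>" "\<epsilon> > 0"
    and a_bound: "\<bar>a\<bar> < 1 / \<bar>\<alpha>\<bar>"
    and stab1: "real_spectral_radius (a \<cdot>\<^sub>m (P - \<alpha> \<cdot>\<^sub>m 1\<^sub>m N)) < 1"
    and stab2: "real_spectral_radius (a \<cdot>\<^sub>m (remove_edge N P i j \<epsilon> - \<alpha> \<cdot>\<^sub>m 1\<^sub>m N)) < 1"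
  shows "MSD_tilde a sr2 sw2 N P \<alpha> \<le> MSD_tilde a sr2 sw2 N (remove_edge N P i j \<epsilon>) \<alpha>"
proof -
  define d :: "real vec" where "d = unit_vec N i - unit_vec N j"
  have dc: "d \<in> carrier_vec N" unfolding d_def by auto
  define E where "E = mat N N (\<lambda>(k,l). d $ k * d $ l)"
  have Ec: "E \<in> carrier_mat N N" unfolding E_def by auto
  define P2 where "P2 = remove_edge N P i j \<epsilon>"
  have P2E: "P2 = P + \<epsilon> \<cdot>\<^sub>m E" unfolding P2_def remove_edge_def d_def E_def Let_def ..
  have P2c: "P2 \<in> carrier_mat N N" unfolding P2E using P_dim Ec by auto
  have P2sym: "transpose_mat P2 = P2"
  proof (rule eq_matI)
    fix k l assume "k < dim_row P2" "l < dim_col P2"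
    hence kl: "k < N" "l < N" using P2c by auto
    have "P $$ (l, k) = P $$ (k, l)" using arg_cong[OF P_sym, of "\<lambda>M. M $$ (k,l)"] P_dim kl by simp
    thus "transpose_mat P2 $$ (k, l) = P2 $$ (k, l)" unfolding P2E E_def using kl P_dim by simp
  qed (insert P2c, auto)
  have quad_le: "x \<bullet> (P *\<^sub>v x) \<le> x \<bullet> (P2 *\<^sub>v x)" if x: "x \<in> carrier_vec N" for x
  proof -
    have Ex: "(\<epsilon> \<cdot>\<^sub>m E) *\<^sub>v x = (\<epsilon> * (d \<bullet> x)) \<cdot>\<^sub>v d"
    proof (rule eq_vecI)
      fix k assume "k < dim_vec ((\<epsilon> * (d \<bullet> x)) \<cdot>\<^sub>v d)"
      hence k: "k < N" using dc by auto
      have "row (\<epsilon> \<cdot>\<^sub>m E) k = (\<epsilon> * d $ k) \<cdot>\<^sub>v d" unfolding E_def using k dc by (intro eq_vecI, auto)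
      hence "((\<epsilon> \<cdot>\<^sub>m E) *\<^sub>v x) $ k = ((\<epsilon> * d $ k) \<cdot>\<^sub>v d) \<bullet> x" using k Ec by simp
      also have "\<dots> = (\<epsilon> * d $ k) * (d \<bullet> x)" using dc x by simp
      finally show "((\<epsilon> \<cdot>\<^sub>m E) *\<^sub>v x) $ k = ((\<epsilon> * (d \<bullet> x)) \<cdot>\<^sub>v d) $ k" using k dc by simp
    qed (insert Ec dc, auto)
    have "P2 *\<^sub>v x = P *\<^sub>v x + (\<epsilon> \<cdot>\<^sub>m E) *\<^sub>v x" unfolding P2E
      by (rule add_mult_distrib_mat_vec[OF P_dim _ x], insert Ec, auto)
    hence "x \<bullet> (P2 *\<^sub>v x) = x \<bullet> (P *\<^sub>v x) + x \<bullet> ((\<epsilon> * (d \<bullet> x)) \<cdot>\<^sub>v d)"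
      unfolding Ex using x P_dim dc by (simp add: scalar_prod_add_distrib[of _ N])
    also have "x \<bullet> ((\<epsilon> * (d \<bullet> x)) \<cdot>\<^sub>v d) = \<epsilon> * (d \<bullet> x) * (x \<bullet> d)" using x dc by simp
    also have "x \<bullet> d = d \<bullet> x" by (rule comm_scalar_prod[OF x dc])
    finally have "x \<bullet> (P2 *\<^sub>v x) = x \<bullet> (P *\<^sub>v x) + \<epsilon> * (d \<bullet> x)^2" by (simp add: power2_eq_square)
    moreover have "\<epsilon> * (d \<bullet> x)^2 \<ge> 0" using eps by simp
    ultimately show ?thesis by linarith
  qed
  obtain U D where U: "U \<in> carrier_mat N N" and D: "D \<in> carrier_mat N N" and dD: "diagonal_mat D"
    and UtU: "transpose_mat U * U = 1\<^sub>m N" and PU: "P = U * D * transpose_mat U"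
    using spectral_decomp[OF P_dim P_sym] by auto
  obtain U2 D2 where U2: "U2 \<in> carrier_mat N N" and D2: "D2 \<in> carrier_mat N N" and dD2: "diagonal_mat D2"
    and UtU2: "transpose_mat U2 * U2 = 1\<^sub>m N" and PU2: "P2 = U2 * D2 * transpose_mat U2"
    using spectral_decomp[OF P2c P2sym] by auto
  have eP: "eig_mset P = mset (diag_mat D)" by (rule eig_decomp[OF P_dim U D dD UtU PU])
  have eP2: "eig_mset P2 = mset (diag_mat D2)" by (rule eig_decomp[OF P2c U2 D2 dD2 UtU2 PU2])
  have qcol: "col V k \<bullet> (M *\<^sub>v col V k) = DD $$ (k,k)"
    if V: "(V :: real mat) \<in> carrier_mat N N" and DD: "DD \<in> carrier_mat N N" and dDD: "diagonal_mat DD"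
      and VtV: "transpose_mat V * V = 1\<^sub>m N" and MV: "M = V * DD * transpose_mat V" and k: "k < N" for V DD M k
  proof -
    have ck: "col V k \<in> carrier_vec N" using V k by auto
    have "col V k \<bullet> (M *\<^sub>v col V k) = (\<Sum>l\<in>{0..<N}. DD $$ (l,l) * (col V l \<bullet> col V k)^2)"
      by (rule quad_form(1)[OF V DD dDD VtV MV ck])
    also have "\<dots> = (\<Sum>l\<in>{0..<N}. if l = k then DD $$ (k,k) else 0)"
      by (intro sum.cong refl, insert col_unit[OF V VtV _ k], auto)
    also have "\<dots> = DD $$ (k,k)" using k by simp
    finally show ?thesis .
  qed
  have cnz: "col V k \<noteq> 0\<^sub>v N" if V: "(V :: real mat) \<in> carrier_mat N N" and VtV: "transpose_mat V * V = 1\<^sub>m N" and k: "k < N" for V k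
  proof
    assume "col V k = 0\<^sub>v N"
    hence "col V k \<bullet> col V k = 0" by simp
    thus False using col_unit[OF V VtV k k] by simp
  qed
  have aa: "a^2 * \<alpha>^2 < 1"
  proof -
    have "\<bar>a\<bar> * \<alpha> < 1" using a_bound alpha by (simp add: field_simps)
    hence "(\<bar>a\<bar> * \<alpha>)^2 < 1^2" using alpha by (intro power_strict_mono, auto)
    thus ?thesis by (simp add: power_mult_distrib)
  qed
  have rngD: "0 \<le> D $$ (k,k) \<and> a^2 * (D $$ (k,k) - \<alpha>)^2 < 1" if k: "k < N" for k
  proof
    have ck: "col U k \<in> carrier_vec N" using U k by auto
    show "0 \<le> D $$ (k,k)" using P_psd[rule_format, OF ck] qcol[OF U D dD UtU PU k] by simp
    have "\<bar>a * (D $$ (k,k) - \<alpha>)\<bar> \<le> real_spectral_radius (a \<cdot>\<^sub>m (P - \<alpha> \<cdot>\<^sub>m 1\<^sub>m N))"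
      by (rule sr_bound[OF P_dim _ cnz[OF U UtU k] eigcol[OF U D dD UtU PU k]], insert U k, auto)
    hence "\<bar>a * (D $$ (k,k) - \<alpha>)\<bar> < 1" using stab1 by linarith
    hence "\<bar>a * (D $$ (k,k) - \<alpha>)\<bar>^2 < 1^2" by (intro power_strict_mono, auto)
    thus "a^2 * (D $$ (k,k) - \<alpha>)^2 < 1" by (simp add: power_mult_distrib)
  qed
  have rngD2: "0 \<le> D2 $$ (k,k) \<and> a^2 * (D2 $$ (k,k) - \<alpha>)^2 < 1" if k: "k < N" for k
  proof
    have ck: "col U2 k \<in> carrier_vec N" using U2 k by auto
    show "0 \<le> D2 $$ (k,k)" using P_psd[rule_format, OF ck] quad_le[OF ck] qcol[OF U2 D2 dD2 UtU2 PU2 k] by linarith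
    have "\<bar>a * (D2 $$ (k,k) - \<alpha>)\<bar> \<le> real_spectral_radius (a \<cdot>\<^sub>m (P2 - \<alpha> \<cdot>\<^sub>m 1\<^sub>m N))"
      by (rule sr_bound[OF P2c ck cnz[OF U2 UtU2 k] eigcol[OF U2 D2 dD2 UtU2 PU2 k]])
    hence "\<bar>a * (D2 $$ (k,k) - \<alpha>)\<bar> < 1" using stab2 unfolding P2_def by linarith
    hence "\<bar>a * (D2 $$ (k,k) - \<alpha>)\<bar>^2 < 1^2" by (intro power_strict_mono, auto)
    thus "a^2 * (D2 $$ (k,k) - \<alpha>)^2 < 1" by (simp add: power_mult_distrib)
  qed
  have memD: "(x::real) \<in># mset (diag_mat DD) \<Longrightarrow> DD \<in> carrier_mat N N \<Longrightarrow> \<exists>k<N. x = DD $$ (k,k)" for x DD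
    unfolding diag_mat_def by auto
  define g where "g = (\<lambda>l::real. a^2 * \<alpha>^2 * sw2 * l^2 / (1 - a^2 * (l - \<alpha>)^2))"
  have sum_le: "sum_mset (image_mset g (eig_mset P)) \<le> sum_mset (image_mset g (eig_mset P2))"
    unfolding eP eP2
  proof (rule mset_sum_mono)
    show "size (mset (diag_mat D)) = size (mset (diag_mat D2))" using D D2 unfolding diag_mat_def by simp
    show "\<forall>x\<in>#mset (diag_mat D). \<forall>y\<in>#mset (diag_mat D2). x \<le> y \<longrightarrow> g x \<le> g y"
    proof (intro ballI impI)
      fix x y assume x: "x \<in># mset (diag_mat D)" and y: "y \<in># mset (diag_mat D2)" and xy: "x \<le> y"
      obtain k where k: "k < N" "x = D $$ (k,k)" using memD[OF x D] by auto
      obtain l where l: "l < N" "y = D2 $$ (l,l)" using memD[OF y D2] by auto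
      show "g x \<le> g y" unfolding g_def
        by (rule f_mono[OF _ xy aa], insert rngD[OF k(1)] rngD2[OF l(1)] k l alpha sig, auto)
    qed
    show "\<forall>t. size (filter_mset ((<) t) (mset (diag_mat D))) \<le> size (filter_mset ((<) t) (mset (diag_mat D2)))"
    proof
      fix t
      have "card {k\<in>{0..<N}. t < D $$ (k,k)} \<le> card {k\<in>{0..<N}. t < D2 $$ (k,k)}"
        by (rule count_mono[OF U D dD UtU PU U2 D2 dD2 UtU2 PU2 quad_le])
      thus "size (filter_mset ((<) t) (mset (diag_mat D))) \<le> size (filter_mset ((<) t) (mset (diag_mat D2)))"
        using size_filter_diag[OF D, of t] size_filter_diag[OF D2, of t] by simp
    qed
  qed
  have "1 / real N * sum_mset (image_mset g (eig_mset P)) \<le> 1 / real N * sum_mset (image_mset g (eig_mset P2))"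
    by (rule mult_left_mono[OF sum_le], simp)
  thus ?thesis unfolding MSD_tilde_def P2_def g_def by simp
qed


end
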